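(* Let $p\ge1$ and let $\widetilde X$ be the genus-$p$ maxface obtained from a reflexive symmetric zigzag, whose Gauss map $g$ and height form $dh$ on the sheet over the upper half-plane are $g=\frac{e^{\pm i\pi/4}}{c}\prod_{j=-p}^p(z-t_j)^{a_j}$, $dh=c\,dz$ (with $t_j,a_j,c$ as in the context). Let $G(z)=\frac{1}{c^2}\prod_{j=-p}^p(z-t_j)^{2a_j}$ on $\mathbb{C}\cup\{\infty\}$. If $G'(z)\neq0$ at every point of the singular set, then the singular set of the maxface on its defining Riemann surface $\mathcal{R}_{NE}\setminus\{P_\infty\}$ consists of exactly $p+1$ pairwise disjoint loops.
   Context: A zigzag of genus $p$ is an open, properly embedded arc in $\mathbb{C}$ of alternating horizontal and vertical segments with $2p+1$ vertices $P_{-p},\dots,P_p$, an initial infinite vertical side and terminal infinite horizontal side, angles $\pi/2,3\pi/2,\dots,3\pi/2,\pi/2$ between consecutive sides; symmetric means symmetric about $y=x$; reflexive means there is a conformal map between its two complementary regions $\Omega_{NE}\to\Omega_{SW}$ sending $P_j$ to $P_{-j}$. The region $\Omega_{NE}$ is the image of the closed upper half-plane under the Schwarz–Christoffel map $F(z)=\int_i^z\prod_{j=-p}^p(t-t_j)^{a_j}dt$, where $t_{-p}<\dots<t_p$ are real with $F(t_j)=P_j$, $t_{-j}=-t_j$, and $a_j\in\{\pm\frac12\}$ alternate in sign starting from $a_{-p}=-\frac12$. $\mathcal{R}_{NE}$ is the hyperelliptic double cover, branched at the $t_j$ and $\infty=P_\infty$, of the doubled region (a sphere); the maxface has Weierstrass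 data $(g,dh)$ as stated on the sheet over the upper half-plane, extended to $\mathcal{R}_{NE}$ by reflections and the hyperelliptic involution, and $c$ is a nonzero constant. The singular set of the maxface is $\{q:|g(q)|=1\}$. *)

theory Defs
  imports "HOL-Analysis.Analysis"
begin

definition twice_exp :: "nat \<Rightarrow> int \<Rightarrow> int" where
  "twice_exp p j = (if even (j + int p) then -1 else 1)"

definition sc_exp :: "nat \<Rightarrow> int \<Rightarrow> real" where
  "sc_exp p j = of_int (twice_exp p j) / 2"

definition Gfun :: "nat \<Rightarrow> (int \<Rightarrow> real) \<Rightarrow> complex \<Rightarrow> complex \<Rightarrow> complex" where
  "Gfun p t c z = (1 / c^2) * (\<Prod>j\<in>{-int p..int p}. (z - of_real (t j)) powi (twice_exp p j))"

text \<open>The hyperelliptic surface R_NE minus the branch point P_infinity, modelled as the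
  affine curve w^2 = prod_j (z - t_j) in C x C (subspace topology); (z,w) lies over z.\<close>
definition hyp_curve :: "nat \<Rightarrow> (int \<Rightarrow> real) \<Rightarrow> (complex \<times> complex) set" where
  "hyp_curve p t = {(z, w). w^2 = (\<Prod>j\<in>{-int p..int p}. z - of_real (t j))}"

text \<open>The Gauss map g = e^{s i pi/4}/c * prod_j (z - t_j)^{a_j}, written on the curve as
  e^{s i pi/4}/c * (prod_{a_j = 1/2} (z - t_j)) / w (this is the algebraic continuation
  of the formula on the sheet over the upper half plane).  At branch points the value is
  0 or a pole; in either case |g| <> 1 there, matching the convention x/0 = 0.\<close>
definition gauss_map :: "nat \<Rightarrow> (int \<Rightarrow> real) \<Rightarrow> complex \<Rightarrow> real \<Rightarrow> complex \<times> complex \<Rightarrow> complex" where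
  "gauss_map p t c s q =
     exp (of_real (s * pi / 4) * \<i>) / c *
     (\<Prod>j\<in>{j\<in>{-int p..int p}. twice_exp p j = 1}. fst q - of_real (t j)) / snd q"

definition singular_set :: "nat \<Rightarrow> (int \<Rightarrow> real) \<Rightarrow> complex \<Rightarrow> real \<Rightarrow> (complex \<times> complex) set" where
  "singular_set p t c s = {q \<in> hyp_curve p t. cmod (gauss_map p t c s q) = 1}"

end

theory Submission
  imports Defs "HOL-Complex_Analysis.Complex_Analysis" "HOL-Computational_Algebra.Fundamental_Theorem_Algebra"
begin
lemma twice_exp_cases: "twice_exp p j = 1 \<or> twice_exp p j = -1"
  by (simp add: twice_exp_def)

lemma Ip_eq: "{j\<in>{-int p..int p}. twice_exp p j = 1} = (\<lambda>k. 2*int k + 1 - int p) ` {..<p}"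
proof (rule set_eqI, rule iffI)
  fix j assume "j \<in> {j\<in>{-int p..int p}. twice_exp p j = 1}"
  then have j: "-int p \<le> j" "j \<le> int p" "odd (j + int p)"
    by (auto simp: twice_exp_def split: if_splits)
  then obtain m where m: "j + int p = 2*m+1" by (metis oddE)
  then have "0 \<le> m" "m < int p" using j by linarith+
  then have "j = 2 * int (nat m) + 1 - int p" "nat m < p" using m by auto
  then show "j \<in> (\<lambda>k. 2*int k + 1 - int p) ` {..<p}" by blast
next
  fix j assume "j \<in> (\<lambda>k. 2*int k + 1 - int p) ` {..<p}"
  then obtain k where "k < p" "j = 2*int k + 1 - int p" by auto
  then show "j \<in> {j\<in>{-int p..int p}. twice_exp p j = 1}"
    by (auto simp: twice_exp_def)
qed

lemma Im_eq: "{j\<in>{-int p..int p}. twice_exp p j = -1} = (\<lambda>k. 2*int k - int p) ` {..p}"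
proof (rule set_eqI, rule iffI)
  fix j assume "j \<in> {j\<in>{-int p..int p}. twice_exp p j = -1}"
  then have j: "-int p \<le> j" "j \<le> int p" "even (j + int p)"
    by (auto simp: twice_exp_def split: if_splits)
  then obtain m where m: "j + int p = 2*m" by (metis evenE)
  then have "0 \<le> m" "m \<le> int p" using j by linarith+
  then have "j = 2 * int (nat m) - int p" "nat m \<le> p" using m by auto
  then show "j \<in> (\<lambda>k. 2*int k - int p) ` {..p}" by blast
next
  fix j assume "j \<in> (\<lambda>k. 2*int k - int p) ` {..p}"
  then obtain k where "k \<le> p" "j = 2*int k - int p" by auto
  then show "j \<in> {j\<in>{-int p..int p}. twice_exp p j = -1}"
    by (auto simp: twice_exp_def)
qed

lemma prod_I_split:
  fixes f :: "int \<Rightarrow> 'a::comm_monoid_mult"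
  shows "(\<Prod>j\<in>{-int p..int p}. f j) =
    (\<Prod>j\<in>{j\<in>{-int p..int p}. twice_exp p j = 1}. f j) * (\<Prod>j\<in>{j\<in>{-int p..int p}. twice_exp p j = -1}. f j)"
proof -
  have "{-int p..int p} = {j\<in>{-int p..int p}. twice_exp p j = 1} \<union> {j\<in>{-int p..int p}. twice_exp p j = -1}"
    using twice_exp_cases by auto
  moreover have "{j\<in>{-int p..int p}. twice_exp p j = 1} \<inter> {j\<in>{-int p..int p}. twice_exp p j = -1} = {}"
    by auto
  ultimately show ?thesis
    by (metis (no_types, lifting) finite_Int finite_atLeastAtMost_int prod.union_disjoint Int_commute finite_Un)
qed

lemma prod_Ip:
  fixes f :: "int \<Rightarrow> 'a::comm_monoid_mult"
  shows "(\<Prod>j\<in>{j\<in>{-int p..int p}. twice_exp p j = 1}. f j) = (\<Prod>k<p. f (2*int k + 1 - int p))"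
  unfolding Ip_eq by (subst prod.reindex) (auto simp: inj_on_def)

lemma prod_Im:
  fixes f :: "int \<Rightarrow> 'a::comm_monoid_mult"
  shows "(\<Prod>j\<in>{j\<in>{-int p..int p}. twice_exp p j = -1}. f j) = (\<Prod>k\<le>p. f (2*int k - int p))"
  unfolding Im_eq by (subst prod.reindex) (auto simp: inj_on_def)

locale zz =
  fixes p :: nat and t :: "int \<Rightarrow> real" and c :: complex
  assumes c_nz: "c \<noteq> 0"
    and nondeg: "\<And>z. cmod (Gfun p t c z) = 1 \<Longrightarrow> deriv (Gfun p t c) z \<noteq> 0"
    and t_mono: "\<And>i j. -int p \<le> i \<Longrightarrow> i < j \<Longrightarrow> j \<le> int p \<Longrightarrow> t i < t j"
begin

definition qp :: "nat \<Rightarrow> real" where "qp k = t (2*int k + 1 - int p)"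
definition qm :: "nat \<Rightarrow> real" where "qm k = t (2*int k - int p)"

definition PPp :: "complex poly" where "PPp = (\<Prod>k<p. [:- of_real (qp k), 1:])"
definition PPm :: "complex poly" where "PPm = (\<Prod>k\<le>p. [:- of_real (qm k), 1:])"

definition Pp :: "complex \<Rightarrow> complex" where "Pp z = (\<Prod>k<p. z - of_real (qp k))"
definition Pm :: "complex \<Rightarrow> complex" where "Pm z = (\<Prod>k\<le>p. z - of_real (qm k))"

lemma poly_PPp: "poly PPp z = Pp z"
  by (simp add: PPp_def Pp_def poly_prod)
lemma poly_PPm: "poly PPm z = Pm z"
  by (simp add: PPm_def Pm_def poly_prod)

lemma degree_PPp: "degree PPp = p"
  unfolding PPp_def by (subst degree_prod_eq_sum_degree) auto
lemma degree_PPm: "degree PPm = Suc p"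
  unfolding PPm_def by (subst degree_prod_eq_sum_degree) auto
lemma PPm_nz: "PPm \<noteq> 0"
  unfolding PPm_def by (auto simp: prod_zero_iff)

lemma qm_mono: "a < b \<Longrightarrow> b \<le> p \<Longrightarrow> qm a < qm b"
  unfolding qm_def by (rule t_mono) auto
lemma qm_mono': "a \<le> b \<Longrightarrow> b \<le> p \<Longrightarrow> qm a \<le> qm b"
  using qm_mono by (cases "a = b") (auto simp: le_less)
lemma qm_qp: "k < p \<Longrightarrow> qm k < qp k"
  unfolding qm_def qp_def by (rule t_mono) auto
lemma qp_qm: "k < p \<Longrightarrow> qp k < qm (Suc k)"
  unfolding qm_def qp_def by (rule t_mono) auto

lemma qp_ne_qm: "k < p \<Longrightarrow> m \<le> p \<Longrightarrow> qp k \<noteq> qm m"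
proof -
  assume k: "k < p" and m: "m \<le> p"
  show ?thesis
  proof (cases "m \<le> k")
    case True
    then have "qm m \<le> qm k" using qm_mono' k by auto
    then show ?thesis using qm_qp[OF k] by auto
  next
    case False
    then have "qm (Suc k) \<le> qm m" using qm_mono' m by auto
    then show ?thesis using qp_qm[OF k] by auto
  qed
qed

lemma Pp_Pm_nz: "Pp z \<noteq> 0 \<or> Pm z \<noteq> 0"
proof (rule ccontr)
  assume "\<not> (Pp z \<noteq> 0 \<or> Pm z \<noteq> 0)"
  then obtain k m where "k < p" "z = of_real (qp k)" "m \<le> p" "z = of_real (qm m)"
    by (auto simp: Pp_def Pm_def prod_zero_iff)
  then show False using qp_ne_qm[of k m] by auto
qed

lemma Gfun_eq: "Gfun p t c z = Pp z / Pm z / c^2"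
proof -
  let ?f = "\<lambda>j. z - of_real (t j)"
  have "(\<Prod>j\<in>{-int p..int p}. ?f j powi twice_exp p j) =
    (\<Prod>j\<in>{j\<in>{-int p..int p}. twice_exp p j = 1}. ?f j powi twice_exp p j) *
    (\<Prod>j\<in>{j\<in>{-int p..int p}. twice_exp p j = -1}. ?f j powi twice_exp p j)"
    by (rule prod_I_split)
  also have "(\<Prod>j\<in>{j\<in>{-int p..int p}. twice_exp p j = 1}. ?f j powi twice_exp p j) =
      (\<Prod>j\<in>{j\<in>{-int p..int p}. twice_exp p j = 1}. ?f j)"
    by (rule prod.cong) auto
  also have "\<dots> = Pp z" unfolding prod_Ip Pp_def qp_def by simp
  also have "(\<Prod>j\<in>{j\<in>{-int p..int p}. twice_exp p j = -1}. ?f j powi twice_exp p j) =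
      (\<Prod>j\<in>{j\<in>{-int p..int p}. twice_exp p j = -1}. (inverse \<circ> ?f) j)"
    by (rule prod.cong) (auto simp: power_int_minus)
  also have "\<dots> = inverse (Pm z)" unfolding prod_Im Pm_def qm_def
    using prod_inversef[of "\<lambda>k. z - of_real (t (2*int k - int p))" "{..p}"] by (simp add: o_def)
  finally show ?thesis unfolding Gfun_def by (simp add: divide_inverse mult_ac)
qed

lemma hyp_curve_eq: "hyp_curve p t = {(z, w). w^2 = Pp z * Pm z}"
proof -
  have "(\<Prod>j\<in>{-int p..int p}. z - of_real (t j)) = Pp z * Pm z" for z
    unfolding prod_I_split prod_Ip prod_Im Pp_def Pm_def qp_def qm_def by simp
  then show ?thesis unfolding hyp_curve_def by simp
qed

lemma gauss_map_eq: "gauss_map p t c s q = exp (of_real (s * pi / 4) * \<i>) / c * Pp (fst q) / snd q"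
  unfolding gauss_map_def prod_Ip Pp_def qp_def by simp

end

context zz begin

definition H :: "complex \<Rightarrow> complex" where "H z = Pp z / Pm z"
definition rho :: real where "rho = (cmod c)^2"
definition Xs :: "complex set" where "Xs = {z. cmod (H z) = rho}"
definition QQ :: "complex \<Rightarrow> complex poly" where "QQ y = PPp - smult y PPm"
definition fib :: "complex \<Rightarrow> complex set" where "fib y = {z. poly (QQ y) z = 0}"
definition Om :: "complex set" where "Om = {z. Pm z \<noteq> 0}"

lemma rho_pos: "rho > 0"
  using c_nz by (simp add: rho_def)

lemma Pp_poly: "Pp = poly PPp" by (rule ext) (simp add: poly_PPp)
lemma Pm_poly: "Pm = poly PPm" by (rule ext) (simp add: poly_PPm)

lemma open_Om: "open Om"
proof -
  have "Om = - {z. poly PPm z = 0}" by (auto simp: Om_def poly_PPm)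
  moreover have "closed {z. poly PPm z = 0}"
    using poly_roots_finite[OF PPm_nz] finite_imp_closed by blast
  ultimately show ?thesis by auto
qed

lemma H_holo: "H holomorphic_on Om"
proof -
  have "(\<lambda>z. poly PPp z / poly PPm z) holomorphic_on Om"
    by (intro holomorphic_intros) (auto simp: Om_def poly_PPm)
  then show ?thesis unfolding H_def[abs_def] by (simp add: poly_PPp poly_PPm)
qed

lemma H_cont: "continuous_on Om H"
  using H_holo holomorphic_on_imp_continuous_on by blast

lemma Xs_props: "z \<in> Xs \<Longrightarrow> Pm z \<noteq> 0 \<and> Pp z \<noteq> 0"
  using rho_pos by (auto simp: Xs_def H_def)

lemma Xs_Om: "Xs \<subseteq> Om" using Xs_props by (auto simp: Om_def)

definition dH :: "complex \<Rightarrow> complex" where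
  "dH z = (poly (pderiv PPp) z * Pm z - Pp z * poly (pderiv PPm) z) / (Pm z * Pm z)"

lemma H_deriv: "Pm z \<noteq> 0 \<Longrightarrow> (H has_field_derivative dH z) (at z)"
proof -
  assume "Pm z \<noteq> 0"
  have "((\<lambda>z. poly PPp z / poly PPm z) has_field_derivative
     (poly (pderiv PPp) z * poly PPm z - poly PPp z * poly (pderiv PPm) z) / (poly PPm z * poly PPm z)) (at z)"
    by (rule DERIV_divide[OF poly_DERIV poly_DERIV]) (use \<open>Pm z \<noteq> 0\<close> in \<open>simp add: poly_PPm\<close>)
  then show ?thesis unfolding H_def[abs_def] dH_def by (simp add: poly_PPp poly_PPm)
qed

lemma Gfun_fun: "Gfun p t c = (\<lambda>z. H z / c^2)"
  by (rule ext) (simp add: Gfun_eq H_def)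

lemma dH_nz: "z \<in> Xs \<Longrightarrow> dH z \<noteq> 0"
proof -
  assume z: "z \<in> Xs"
  then have Pm: "Pm z \<noteq> 0" using Xs_props by blast
  have "cmod (Gfun p t c z) = 1"
    using z c_nz by (simp add: Gfun_fun Xs_def rho_def norm_divide norm_power)
  then have "deriv (Gfun p t c) z \<noteq> 0" by (rule nondeg)
  moreover have "((\<lambda>z. H z / c^2) has_field_derivative dH z / c^2) (at z)"
    by (rule DERIV_cdivide[OF H_deriv[OF Pm]])
  ultimately show ?thesis unfolding Gfun_fun using DERIV_imp_deriv by fastforce
qed

lemma poly_QQ: "poly (QQ y) z = Pp z - y * Pm z"
  by (simp add: QQ_def poly_PPp poly_PPm)

lemma fib_iff: "y \<noteq> 0 \<Longrightarrow> z \<in> fib y \<longleftrightarrow> Pm z \<noteq> 0 \<and> H z = y"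
proof -
  assume y: "y \<noteq> 0"
  show ?thesis
  proof
    assume "z \<in> fib y"
    then have e: "Pp z = y * Pm z" by (simp add: fib_def poly_QQ)
    then have "Pm z \<noteq> 0" using Pp_Pm_nz[of z] by auto
    then show "Pm z \<noteq> 0 \<and> H z = y" using e by (simp add: H_def)
  next
    assume h: "Pm z \<noteq> 0 \<and> H z = y"
    then have "Pp z = y * Pm z" by (auto simp: H_def divide_eq_eq)
    then show "z \<in> fib y" by (simp add: fib_def poly_QQ)
  qed
qed

lemma fib_X: "cmod y = rho \<Longrightarrow> fib y = {z\<in>Xs. H z = y}"
proof -
  assume y: "cmod y = rho"
  then have "y \<noteq> 0" using rho_pos by auto
  then show ?thesis using y Xs_props by (auto simp: fib_iff Xs_def)
qed

lemma degree_QQ: "y \<noteq> 0 \<Longrightarrow> degree (QQ y) = Suc p"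
proof -
  assume y: "y \<noteq> 0"
  have "QQ y = PPp + smult (-y) PPm" by (simp add: QQ_def)
  moreover have "degree PPp < degree (smult (-y) PPm)" using y by (simp add: degree_PPp degree_PPm)
  ultimately have "degree (QQ y) = degree (smult (-y) PPm)" using degree_add_eq_right by metis
  then show ?thesis using y by (simp add: degree_PPm)
qed

lemma QQ_nz: "y \<noteq> 0 \<Longrightarrow> QQ y \<noteq> 0"
  using degree_QQ by fastforce

lemma rsq_QQ: "cmod y = rho \<Longrightarrow> rsquarefree (QQ y)"
proof -
  assume y: "cmod y = rho"
  then have y0: "y \<noteq> 0" using rho_pos by auto
  show ?thesis unfolding rsquarefree_roots
  proof (intro allI notI)
    fix a assume a: "poly (QQ y) a = 0 \<and> poly (pderiv (QQ y)) a = 0"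
    then have "a \<in> fib y" by (simp add: fib_def)
    then have aX: "a \<in> Xs" and Ha: "H a = y" using fib_X[OF y] by auto
    then have Pm: "Pm a \<noteq> 0" using Xs_props by blast
    have e: "Pp a = y * Pm a" using Ha Pm by (simp add: H_def field_simps)
    have "poly (pderiv (QQ y)) a = poly (pderiv PPp) a - y * poly (pderiv PPm) a"
      by (simp add: QQ_def pderiv_diff pderiv_smult)
    then have "poly (pderiv PPp) a * Pm a - Pp a * poly (pderiv PPm) a = 0"
      using a e by (simp add: algebra_simps)
    then have "dH a = 0" by (simp add: dH_def)
    then show False using dH_nz[OF aX] by simp
  qed
qed

lemma card_fib: "cmod y = rho \<Longrightarrow> finite (fib y) \<and> card (fib y) = Suc p"
proof -
  assume y: "cmod y = rho"
  then have y0: "y \<noteq> 0" using rho_pos by auto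
  have fin: "finite (fib y)" unfolding fib_def by (rule poly_roots_finite[OF QQ_nz[OF y0]])
  have "smult (lead_coeff (QQ y)) (\<Prod>z|poly (QQ y) z = 0. [:-z, 1:]) = QQ y"
    by (rule complex_poly_decompose_rsquarefree[OF rsq_QQ[OF y]])
  then have "degree (QQ y) = degree (\<Prod>z\<in>fib y. [:-z, 1:])"
    using QQ_nz[OF y0] by (metis degree_smult_eq fib_def leading_coeff_0_iff) 
  also have "\<dots> = card (fib y)"
    by (subst degree_prod_eq_sum_degree) auto
  finally show ?thesis using fin degree_QQ[OF y0] by simp
qed

end

context zz begin

lemma H_image: "H ` Xs = sphere 0 rho"
proof
  show "H ` Xs \<subseteq> sphere 0 rho" by (auto simp: Xs_def)
  show "sphere 0 rho \<subseteq> H ` Xs"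
  proof
    fix y :: complex assume "y \<in> sphere 0 rho"
    then have y: "cmod y = rho" by simp
    then have "fib y \<noteq> {}" using card_fib[OF y] by auto
    then obtain z where "z \<in> fib y" by blast
    then show "y \<in> H ` Xs" using fib_X[OF y] by auto
  qed
qed

lemma deriv_H: "z \<in> Xs \<Longrightarrow> deriv H z \<noteq> 0"
  using H_deriv DERIV_imp_deriv dH_nz Xs_props by metis

lemma loc_inj: "z \<in> Xs \<Longrightarrow> \<exists>r>0. ball z r \<subseteq> Om \<and> inj_on H (ball z r)"
proof -
  assume z: "z \<in> Xs"
  obtain r where "r > 0" "ball z r \<subseteq> Om" "inj_on H (ball z r)"
    using has_complex_derivative_locally_injective[OF H_holo _ open_Om deriv_H[OF z]] z Xs_Om by blast
  then show ?thesis by blast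
qed

lemma open_image_H: "open W \<Longrightarrow> W \<subseteq> Om \<Longrightarrow> inj_on H W \<Longrightarrow> open (H ` W)"
  using open_mapping_thm3 H_holo holomorphic_on_subset by blast

lemma covering: "covering_space Xs H (sphere 0 rho)"
proof (rule covering_spaceI)
  show "continuous_on Xs H" using H_cont Xs_Om continuous_on_subset by blast
  show "H ` Xs = sphere 0 rho" by (rule H_image)
  fix y :: complex assume "y \<in> sphere 0 rho"
  then have y: "cmod y = rho" by simp
  define F where "F = fib y"
  have finF: "finite F" and cardF: "card F = Suc p" using card_fib[OF y] by (auto simp: F_def)
  have FX: "F \<subseteq> Xs" and FH: "\<And>z. z \<in> F \<Longrightarrow> H z = y" using fib_X[OF y] by (auto simp: F_def)
  have "\<forall>z\<in>F. \<exists>d>0. ball z d \<subseteq> Om \<and> inj_on H (ball z d) \<and> (\<forall>z'\<in>F. z' \<noteq> z \<longrightarrow> 2*d \<le> dist z z')"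
  proof
    fix z assume z: "z \<in> F"
    obtain r where r: "r>0" "ball z r \<subseteq> Om" "inj_on H (ball z r)" using loc_inj FX z by blast
    obtain e where e: "e>0" "\<forall>x\<in>F. x \<noteq> z \<longrightarrow> e \<le> dist z x" using finite_set_avoid[OF finF] by blast
    define d where "d = min r (e/2)"
    have "ball z d \<subseteq> ball z r" by (auto simp: d_def)
    then have "ball z d \<subseteq> Om \<and> inj_on H (ball z d)" using r inj_on_subset by blast
    moreover have "\<forall>z'\<in>F. z' \<noteq> z \<longrightarrow> 2*d \<le> dist z z'" using e by (auto simp: d_def)
    moreover have "d > 0" using r e by (auto simp: d_def)
    ultimately show "\<exists>d>0. ball z d \<subseteq> Om \<and> inj_on H (ball z d) \<and> (\<forall>z'\<in>F. z' \<noteq> z \<longrightarrow> 2*d \<le> dist z z')"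
      by blast
  qed
  then obtain d where d: "\<And>z. z \<in> F \<Longrightarrow> d z > 0" "\<And>z. z \<in> F \<Longrightarrow> ball z (d z) \<subseteq> Om"
      "\<And>z. z \<in> F \<Longrightarrow> inj_on H (ball z (d z))"
      "\<And>z z'. z \<in> F \<Longrightarrow> z' \<in> F \<Longrightarrow> z' \<noteq> z \<Longrightarrow> 2 * d z \<le> dist z z'"
    by metis
  have disj: "ball z (d z) \<inter> ball z' (d z') = {}" if "z \<in> F" "z' \<in> F" "z \<noteq> z'" for z z'
  proof (rule disjoint_ballI)
    have "2 * d z \<le> dist z z'" "2 * d z' \<le> dist z' z" using d(4) that by auto
    then show "d z + d z' \<le> dist z z'" by (simp add: dist_commute)
  qed
  define V where "V = (\<Inter>z\<in>F. H ` ball z (d z))"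
  have openV: "open V" unfolding V_def
    using finF open_image_H d by (intro open_INT) auto
  have yV: "y \<in> V" unfolding V_def using FH d(1) by force
  define T where "T = sphere 0 rho \<inter> V"
  define vs where "vs = (\<lambda>z. ball z (d z) \<inter> H -` T) ` F"
  have ballX: "ball z (d z) \<inter> H -` T = Xs \<inter> (ball z (d z) \<inter> H -` V)" if "z \<in> F" for z
    by (auto simp: T_def Xs_def)
  show "\<exists>T. y \<in> T \<and> openin (top_of_set (sphere 0 rho)) T \<and>
          (\<exists>v. \<Union>v = Xs \<inter> H -` T \<and> (\<forall>u\<in>v. openin (top_of_set Xs) u) \<and>
          pairwise disjnt v \<and> (\<forall>u\<in>v. \<exists>q. homeomorphism u T H q))"
  proof (intro exI conjI)
    show "y \<in> T" using yV y by (simp add: T_def)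
    show "openin (top_of_set (sphere 0 rho)) T" unfolding T_def using openV by blast
    show "\<Union>vs = Xs \<inter> H -` T"
    proof
      show "\<Union>vs \<subseteq> Xs \<inter> H -` T" by (auto simp: vs_def T_def Xs_def)
      show "Xs \<inter> H -` T \<subseteq> \<Union>vs"
      proof
        fix x assume x: "x \<in> Xs \<inter> H -` T"
        define y' where "y' = H x"
        have y': "cmod y' = rho" "y' \<in> V" using x by (auto simp: y'_def T_def)
        have "\<forall>z\<in>F. \<exists>x'. x' \<in> ball z (d z) \<and> H x' = y'"
        proof
          fix z assume "z \<in> F"
          then have "y' \<in> H ` ball z (d z)" using y'(2) unfolding V_def by blast
          then show "\<exists>x'. x' \<in> ball z (d z) \<and> H x' = y'" by blast
        qed
        then obtain ch where ch0: "\<forall>z\<in>F. ch z \<in> ball z (d z) \<and> H (ch z) = y'"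
          by (rule bchoice[elim_format]) blast
        have ch: "ch z \<in> ball z (d z) \<and> H (ch z) = y'" if "z \<in> F" for z
          using ch0 that by blast
        have inj: "inj_on ch F"
        proof (rule inj_onI)
          fix z z' assume zz: "z \<in> F" "z' \<in> F" "ch z = ch z'"
          show "z = z'"
          proof (rule ccontr)
            assume "z \<noteq> z'"
            then have "ball z (d z) \<inter> ball z' (d z') = {}" using disj zz by blast
            moreover have "ch z \<in> ball z (d z) \<inter> ball z' (d z')" using ch[OF zz(1)] ch[OF zz(2)] zz(3) by simp
            ultimately show False by simp
          qed
        qed
        have sub: "ch ` F \<subseteq> fib y'"
        proof
          fix w assume "w \<in> ch ` F"
          then obtain z where z: "z \<in> F" "w = ch z" by auto
          then have "w \<in> Om" using ch d(2) by blast
          then show "w \<in> fib y'" using z ch y' fib_X Xs_def by (auto simp: Om_def)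
        qed
        have "card (ch ` F) = card (fib y')"
          using card_image[OF inj] cardF card_fib[OF y'(1)] by simp
        then have "ch ` F = fib y'" using card_subset_eq card_fib[OF y'(1)] sub by blast
        moreover have "x \<in> fib y'" using x y' fib_X by (auto simp: y'_def)
        ultimately obtain z where z: "z \<in> F" "x = ch z" by auto
        then have "x \<in> ball z (d z) \<inter> H -` T" using ch x by auto
        then show "x \<in> \<Union>vs" using z by (auto simp: vs_def)
      qed
    qed
    show "\<forall>u\<in>vs. openin (top_of_set Xs) u"
    proof
      fix u assume "u \<in> vs"
      then obtain z where z: "z \<in> F" "u = ball z (d z) \<inter> H -` T" by (auto simp: vs_def)
      have "continuous_on (ball z (d z)) H" using H_cont d(2)[OF z(1)] continuous_on_subset by blast
      then have "open (H -` V \<inter> ball z (d z))" using continuous_on_open_vimage openV by blast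
      then show "openin (top_of_set Xs) u" using ballX[OF z(1)] z(2)
        by (metis Int_commute openin_open_Int)
    qed
    show "pairwise disjnt vs"
      unfolding pairwise_def disjnt_def vs_def using disj by fastforce
    show "\<forall>u\<in>vs. \<exists>q. homeomorphism u T H q"
    proof
      fix u assume "u \<in> vs"
      then obtain z where z: "z \<in> F" "u = ball z (d z) \<inter> H -` T" by (auto simp: vs_def)
      have cont: "continuous_on u H" using H_cont d(2)[OF z(1)] continuous_on_subset z(2) by blast
      have img: "H ` u = T"
      proof
        show "H ` u \<subseteq> T" using z by auto
        show "T \<subseteq> H ` u"
        proof
          fix y' assume "y' \<in> T"
          then have "y' \<in> H ` ball z (d z)" using z(1) by (auto simp: T_def V_def)
          then obtain x where "x \<in> ball z (d z)" "y' = H x" by auto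
          then show "y' \<in> H ` u" using \<open>y' \<in> T\<close> z by auto
        qed
      qed
      have inj: "inj_on H u" using d(3)[OF z(1)] z(2) inj_on_subset by blast
      have oo: "openin (top_of_set T) (H ` U)" if "openin (top_of_set u) U" for U
      proof -
        have "\<exists>W. open W \<and> U = u \<inter> W" using that by (simp add: openin_open)
        then obtain W where O: "open W" "U = u \<inter> W" by blast
        have "H ` U = T \<inter> H ` (ball z (d z) \<inter> W)"
        proof
          show "H ` U \<subseteq> T \<inter> H ` (ball z (d z) \<inter> W)" using O z by auto
          show "T \<inter> H ` (ball z (d z) \<inter> W) \<subseteq> H ` U" using O z by auto
        qed
        moreover have "open (H ` (ball z (d z) \<inter> W))"
          using open_image_H[of "ball z (d z) \<inter> W"] O d(2,3)[OF z(1)] inj_on_subset by blast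
        ultimately show ?thesis by (simp add: openin_open_Int)
      qed
      obtain q where "homeomorphism u T H q"
        using homeomorphism_injective_open_map[OF cont img inj oo] by blast
      then show "\<exists>q. homeomorphism u T H q" by blast
    qed
  qed
qed

end

context zz begin

definition Ppr :: "real \<Rightarrow> real" where "Ppr x = (\<Prod>k<p. x - qp k)"
definition Pmr :: "real \<Rightarrow> real" where "Pmr x = (\<Prod>k\<le>p. x - qm k)"

lemma Pp_real: "Pp (of_real x) = of_real (Ppr x)"
  by (simp add: Pp_def Ppr_def)
lemma Pm_real: "Pm (of_real x) = of_real (Pmr x)"
  by (simp add: Pm_def Pmr_def)
lemma Pp_cnj: "Pp (cnj z) = cnj (Pp z)"
  by (simp add: Pp_def)
lemma Pm_cnj: "Pm (cnj z) = cnj (Pm z)"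
  by (simp add: Pm_def)
lemma H_cnj: "H (cnj z) = cnj (H z)"
  by (simp add: H_def Pp_cnj Pm_cnj)

lemma Pmr_qm: "k \<le> p \<Longrightarrow> Pmr (qm k) = 0"
  unfolding Pmr_def by (rule prod_zero) auto

lemma sign_Ppr: "k < p \<Longrightarrow> Ppr (qm k) * Ppr (qm (Suc k)) < 0"
proof -
  assume k: "k < p"
  let ?f = "\<lambda>m. (qm k - qp m) * (qm (Suc k) - qp m)"
  have "Ppr (qm k) * Ppr (qm (Suc k)) = (\<Prod>m<p. ?f m)"
    by (simp add: Ppr_def prod.distrib)
  also have "\<dots> = ?f k * (\<Prod>m\<in>{..<p} - {k}. ?f m)"
    using k by (subst prod.remove[of _ k]) auto
  also have "\<dots> < 0"
  proof (rule mult_neg_pos)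
    show "?f k < 0" using qm_qp[OF k] qp_qm[OF k] by (simp add: mult_neg_pos)
    show "0 < (\<Prod>m\<in>{..<p} - {k}. ?f m)"
    proof (rule prod_pos)
      fix m assume m: "m \<in> {..<p} - {k}"
      show "0 < ?f m"
      proof (cases "m < k")
        case True
        then have "qp m < qm k" using qp_qm[of m] qm_mono'[of "Suc m" k] k by force
        then show ?thesis using qm_mono[of k "Suc k"] k by (simp add: mult_pos_pos)
      next
        case False
        then have "k < m" using m by auto
        then have "qm (Suc k) < qp m" using qm_qp[of m] qm_mono'[of "Suc k" m] m by force
        then show ?thesis using qm_mono[of k "Suc k"] k by (simp add: mult_neg_neg)
      qed
    qed
  qed
  finally show ?thesis .
qed

lemma cont_Q: "continuous_on A (\<lambda>x. Ppr x - r * Pmr x)"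
  unfolding Ppr_def Pmr_def by (intro continuous_intros)

lemma real_root: "k < p \<Longrightarrow> \<exists>x. qm k < x \<and> x < qm (Suc k) \<and> Ppr x - r * Pmr x = 0"
proof -
  assume k: "k < p"
  let ?g = "\<lambda>x. Ppr x - r * Pmr x"
  have ga: "?g (qm k) = Ppr (qm k)" using k by (simp add: Pmr_qm)
  have gb: "?g (qm (Suc k)) = Ppr (qm (Suc k))" using k by (simp add: Pmr_qm)
  have ab: "qm k \<le> qm (Suc k)" using qm_mono[of k "Suc k"] k by simp
  have "Pmr (qm k) = 0" "Pmr (qm (Suc k)) = 0" using k Pmr_qm by auto
  then have s: "?g (qm k) * ?g (qm (Suc k)) < 0" using sign_Ppr[OF k] by simp
  have "\<exists>x. qm k \<le> x \<and> x \<le> qm (Suc k) \<and> ?g x = 0"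
  proof (cases "?g (qm k) \<le> 0")
    case True
    then have "0 \<le> ?g (qm (Suc k))" using s True by (auto simp: mult_less_0_iff)
    then show ?thesis using IVT'[OF True _ ab cont_Q] by blast
  next
    case False
    then have "?g (qm (Suc k)) \<le> 0" using s False by (auto simp: mult_less_0_iff)
    then show ?thesis using IVT2'[of ?g "qm (Suc k)" 0 "qm k", OF _ _ ab cont_Q] False by auto
  qed
  then obtain x where x: "qm k \<le> x" "x \<le> qm (Suc k)" "?g x = 0" by blast
  have "x \<noteq> qm k" using x(3) ga s by auto
  moreover have "x \<noteq> qm (Suc k)" using x(3) gb s by auto
  ultimately have "qm k < x \<and> x < qm (Suc k) \<and> ?g x = 0" using x by auto
  then show ?thesis by blast
qed

lemma fib_real: "r = rho \<or> r = - rho \<Longrightarrow> z \<in> fib (of_real r) \<Longrightarrow> cnj z = z"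
proof (rule ccontr)
  assume r: "r = rho \<or> r = - rho" and z: "z \<in> fib (of_real r)" and nz: "cnj z \<noteq> z"
  have y: "cmod (of_real r) = rho" using r rho_pos by auto
  have "\<forall>k\<in>{..<p}. \<exists>x. qm k < x \<and> x < qm (Suc k) \<and> Ppr x - r * Pmr x = 0"
    using real_root by blast
  then obtain xr where xr: "\<And>k. k < p \<Longrightarrow> qm k < xr k \<and> xr k < qm (Suc k) \<and> Ppr (xr k) - r * Pmr (xr k) = 0"
    by (metis lessThan_iff)
  define R where "R = (\<lambda>k. complex_of_real (xr k)) ` {..<p}"
  have inj: "inj_on (\<lambda>k. complex_of_real (xr k)) {..<p}"
  proof (rule inj_onI)
    fix a b assume ab: "a \<in> {..<p}" "b \<in> {..<p}" "complex_of_real (xr a) = complex_of_real (xr b)"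
    show "a = b"
    proof (rule ccontr)
      assume "a \<noteq> b"
      then consider "a < b" | "b < a" by linarith
      then show False
      proof cases
        case 1
        then have "xr a < xr b" using xr[of a] xr[of b] ab qm_mono'[of "Suc a" b] by force
        then show False using ab by simp
      next
        case 2
        then have "xr b < xr a" using xr[of a] xr[of b] ab qm_mono'[of "Suc b" a] by force
        then show False using ab by simp
      qed
    qed
  qed
  have cardR: "card R = p" unfolding R_def using card_image[OF inj] by simp
  have Rfib: "R \<subseteq> fib (of_real r)"
    using xr by (auto simp: R_def fib_def poly_QQ Pp_real Pm_real simp flip: of_real_mult of_real_diff)
  have cz: "cnj z \<in> fib (of_real r)"
  proof -
    have "Pp z - of_real r * Pm z = 0" using z by (simp add: fib_def poly_QQ)
    then have "cnj (Pp z - of_real r * Pm z) = 0" by simp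
    then show ?thesis by (simp add: fib_def poly_QQ Pp_cnj Pm_cnj)
  qed
  have zR: "z \<notin> R" using nz by (auto simp: R_def)
  have czR: "cnj z \<notin> R"
  proof
    assume "cnj z \<in> R"
    then obtain k where "cnj z = of_real (xr k)" by (auto simp: R_def)
    then have "z = of_real (xr k)" by (metis complex_cnj_cnj complex_cnj_complex_of_real)
    then show False using nz by simp
  qed
  have sub: "insert z (insert (cnj z) R) \<subseteq> fib (of_real r)" using Rfib z cz by auto
  have "card (insert z (insert (cnj z) R)) = p + 2"
    using zR czR nz cardR by (simp add: R_def)
  moreover have "card (insert z (insert (cnj z) R)) \<le> Suc p"
    using card_mono[OF _ sub] card_fib[OF y] by auto
  ultimately show False by simp
qed

end

context zz begin

definition alpha :: "real \<Rightarrow> complex" where "alpha \<tau> = of_real rho * cis (pi * \<tau>)"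
definition beta :: "real \<Rightarrow> complex" where "beta \<tau> = of_real rho * cis (2 * pi * \<tau>)"
definition Z0 :: "complex set" where "Z0 = fib (of_real rho)"

lemma cmod_alpha: "cmod (alpha \<tau>) = rho"
  using rho_pos by (simp add: alpha_def norm_mult)
lemma cmod_beta: "cmod (beta \<tau>) = rho"
  using rho_pos by (simp add: beta_def norm_mult)

lemma path_alpha: "path alpha"
  unfolding path_def alpha_def by (intro continuous_intros)
lemma path_beta: "path beta"
  unfolding path_def beta_def by (intro continuous_intros)

lemma Z0_props: "x \<in> Z0 \<Longrightarrow> x \<in> Xs \<and> H x = of_real rho \<and> cnj x = x"
  using fib_X[of "of_real rho"] fib_real[of rho x] rho_pos by (auto simp: Z0_def)

lemma lift_exists: "x \<in> Z0 \<Longrightarrow> \<exists>h. path h \<and> path_image h \<subseteq> Xs \<and> pathstart h = x \<and> (\<forall>\<tau>\<in>{0..1}. H (h \<tau>) = alpha \<tau>)"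
proof -
  assume x: "x \<in> Z0"
  have img: "path_image alpha \<subseteq> sphere 0 rho" using cmod_alpha by (auto simp: path_image_def)
  have st: "pathstart alpha = H x" using Z0_props[OF x] by (simp add: pathstart_def alpha_def)
  obtain h where "path h" "path_image h \<subseteq> Xs" "pathstart h = x" "\<And>\<tau>. \<tau> \<in> {0..1} \<Longrightarrow> H (h \<tau>) = alpha \<tau>"
    using covering_space_lift_path_strong[OF covering _ path_alpha img st] Z0_props[OF x] by blast
  then show ?thesis by blast
qed

definition hh :: "complex \<Rightarrow> real \<Rightarrow> complex" where
  "hh x = (SOME h. path h \<and> path_image h \<subseteq> Xs \<and> pathstart h = x \<and> (\<forall>\<tau>\<in>{0..1}. H (h \<tau>) = alpha \<tau>))"

lemma hh: "x \<in> Z0 \<Longrightarrow> path (hh x) \<and> path_image (hh x) \<subseteq> Xs \<and> pathstart (hh x) = x \<and> (\<forall>\<tau>\<in>{0..1}. H (hh x \<tau>) = alpha \<tau>)"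
  unfolding hh_def by (rule someI_ex[OF lift_exists])

lemma hh_end_real: "x \<in> Z0 \<Longrightarrow> cnj (hh x 1) = hh x 1"
proof -
  assume x: "x \<in> Z0"
  have "hh x 1 \<in> Xs" using hh[OF x] by (auto simp: path_image_def)
  moreover have "H (hh x 1) = of_real (- rho)" using hh[OF x] by (simp add: alpha_def)
  ultimately have "hh x 1 \<in> fib (of_real (- rho))" using fib_X[of "of_real (- rho)"] rho_pos by auto
  then show ?thesis using fib_real[of "- rho"] by auto
qed

definition zeta :: "complex \<Rightarrow> real \<Rightarrow> complex" where
  "zeta x = hh x +++ reversepath (cnj \<circ> hh x)"

lemma cnj_Xs: "z \<in> Xs \<Longrightarrow> cnj z \<in> Xs"
  by (simp add: Xs_def H_cnj)

lemma zeta: assumes x: "x \<in> Z0"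
  shows "path (zeta x) \<and> path_image (zeta x) \<subseteq> Xs \<and> pathstart (zeta x) = x \<and> pathfinish (zeta x) = x
     \<and> (\<forall>\<tau>\<in>{0..1}. H (zeta x \<tau>) = beta \<tau>)"
proof -
  have h: "path (hh x)" "path_image (hh x) \<subseteq> Xs" "pathstart (hh x) = x" "\<And>\<tau>. \<tau>\<in>{0..1} \<Longrightarrow> H (hh x \<tau>) = alpha \<tau>"
    using hh[OF x] by auto
  have pc: "path (cnj \<circ> hh x)" using h(1) unfolding path_def o_def by (intro continuous_intros)
  have fs: "pathfinish (hh x) = pathstart (reversepath (cnj \<circ> hh x))"
    using hh_end_real[OF x] by (simp add: pathfinish_def pathstart_def reversepath_def)
  have p: "path (zeta x)" unfolding zeta_def using path_join_imp[OF h(1) _ fs] pc by simp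
  have "path_image (cnj \<circ> hh x) \<subseteq> Xs" using h(2) cnj_Xs by (auto simp: path_image_def)
  then have pi: "path_image (zeta x) \<subseteq> Xs" unfolding zeta_def using path_image_join[OF fs] h(2) by auto
  have ps: "pathstart (zeta x) = x" unfolding zeta_def using h(3) by simp
  have pf: "pathfinish (zeta x) = x" unfolding zeta_def using h(3) Z0_props[OF x]
    by (simp add: pathfinish_def pathstart_def reversepath_def joinpaths_def)
  have "H (zeta x \<tau>) = beta \<tau>" if \<tau>: "\<tau>\<in>{0..1}" for \<tau>
  proof (cases "\<tau> \<le> 1/2")
    case True
    then have "zeta x \<tau> = hh x (2 * \<tau>)" by (simp add: zeta_def joinpaths_def)
    moreover have "2 * \<tau> \<in> {0..1}" using True \<tau> by auto
    ultimately show ?thesis using h(4) by (simp add: alpha_def beta_def mult_ac)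
  next
    case False
    then have "zeta x \<tau> = cnj (hh x (2 - 2 * \<tau>))" by (simp add: zeta_def joinpaths_def reversepath_def)
    moreover have "2 - 2 * \<tau> \<in> {0..1}" using False \<tau> by auto
    ultimately have "H (zeta x \<tau>) = cnj (alpha (2 - 2 * \<tau>))" using h(4) by (simp add: H_cnj)
    also have "\<dots> = of_real rho * cis (- (pi * (2 - 2 * \<tau>)))" by (simp add: alpha_def cis_cnj)
    also have "cis (- (pi * (2 - 2 * \<tau>))) = cis (2 * pi * \<tau>) / cis (2 * pi)"
      by (simp add: cis_divide algebra_simps)
    finally show ?thesis by (simp add: beta_def)
  qed
  then show ?thesis using p pi ps pf by blast
qed

lemma zeta_in: "x \<in> Z0 \<Longrightarrow> \<tau> \<in> {0..1} \<Longrightarrow> zeta x \<tau> \<in> Xs"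
  using zeta[of x] by (auto simp: path_image_def)

lemma lift_unique: assumes x: "x \<in> Z0" and x': "x' \<in> Z0" and \<tau>: "\<tau> \<in> {0..1}"
  and eq: "zeta x \<tau> = zeta x' \<tau>" shows "x = x'"
proof -
  have z: "path (zeta x)" "path_image (zeta x) \<subseteq> Xs" "pathstart (zeta x) = x" "\<forall>\<tau>\<in>{0..1}. H (zeta x \<tau>) = beta \<tau>"
    using zeta[OF x] by auto
  have z': "path (zeta x')" "path_image (zeta x') \<subseteq> Xs" "pathstart (zeta x') = x'" "\<forall>\<tau>\<in>{0..1}. H (zeta x' \<tau>) = beta \<tau>"
    using zeta[OF x'] by auto
  have c1: "continuous_on {0..1} beta" using path_beta by (simp add: path_def)
  have c2: "beta \<in> {0..1} \<rightarrow> sphere 0 rho" using cmod_beta by auto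
  have c3: "continuous_on {0..1} (zeta x)" using z(1) by (simp add: path_def)
  have c4: "zeta x \<in> {0..1} \<rightarrow> Xs" using z(2) by (auto simp: path_image_def)
  have c5: "\<And>y. y \<in> {0..1} \<Longrightarrow> beta y = H (zeta x y)" using z(4) by auto
  have c6: "continuous_on {0..1} (zeta x')" using z'(1) by (simp add: path_def)
  have c7: "zeta x' \<in> {0..1} \<rightarrow> Xs" using z'(2) by (auto simp: path_image_def)
  have c8: "\<And>y. y \<in> {0..1} \<Longrightarrow> beta y = H (zeta x' y)" using z'(4) by auto
  have c9: "connected {0..1::real}" by simp
  have c10: "(0::real) \<in> {0..1}" by simp
  have "zeta x 0 = zeta x' 0"
    using covering_space_lift_unique[of Xs H "sphere 0 rho" "zeta x" \<tau> "zeta x'" "{0..1}" beta 0,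
        OF covering eq c1 c2 c3 c4 c5 c6 c7 c8 c9 \<tau> c10] .
  then show ?thesis using z(3) z'(3) by (simp add: pathstart_def)
qed

lemma finite_Z0: "finite Z0" and card_Z0: "card Z0 = Suc p"
  using card_fib[of "of_real rho"] rho_pos by (auto simp: Z0_def)

lemma fib_beta: assumes \<tau>: "\<tau> \<in> {0..1}" shows "fib (beta \<tau>) = (\<lambda>x. zeta x \<tau>) ` Z0"
proof -
  have sub: "(\<lambda>x. zeta x \<tau>) ` Z0 \<subseteq> fib (beta \<tau>)"
    using zeta zeta_in \<tau> fib_X[OF cmod_beta] by auto
  have inj: "inj_on (\<lambda>x. zeta x \<tau>) Z0" using lift_unique \<tau> by (auto simp: inj_on_def)
  have "card ((\<lambda>x. zeta x \<tau>) ` Z0) = card (fib (beta \<tau>))"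
    using card_image[OF inj] card_Z0 card_fib[OF cmod_beta] by simp
  then show ?thesis using card_subset_eq[OF _ sub] card_fib[OF cmod_beta] by auto
qed

end

lemma cis_inj01:
  assumes a: "a \<in> {0..1}" and b: "b \<in> {0..1}" and eq: "cis (2*pi*a) = cis (2*pi*b)"
  shows "a = b \<or> (a = 0 \<and> b = 1) \<or> (a = 1 \<and> b = 0)"
proof -
  have "cis (2*pi*(a-b)) = cis (2*pi*a) / cis (2*pi*b)" by (simp add: cis_divide algebra_simps)
  then have "cis (2*pi*(a-b)) = 1" using eq by simp
  then have "cos (2*pi*(a-b)) = 1" by (metis complex.sel(1) Re_complex_of_real cis.sel(1) one_complex.sel(1))
  then obtain n :: int where n: "2*pi*(a-b) = of_int n * 2 * pi" using cos_one_2pi_int by blast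
  then have "2 * pi * (a - b) = 2 * pi * (of_int n)" by (simp add: algebra_simps)
  then have "a - b = of_int n" using pi_gt_zero by simp
  moreover have "-1 \<le> a - b" "a - b \<le> 1" using a b by auto
  ultimately have "n = -1 \<or> n = 0 \<or> n = 1" by (smt (verit) of_int_le_iff of_int_minus of_int_1 of_int_0)
  then show ?thesis using \<open>a - b = of_int n\<close> a b by auto
qed

context zz begin

definition EE :: "real \<Rightarrow> complex" where "EE s = exp (of_real (s * pi / 4) * \<i>)"
definition u0 :: "real \<Rightarrow> complex" where "u0 s = EE s * of_real (cmod c) / c"

lemma EE_nz: "EE s \<noteq> 0" by (simp add: EE_def)
lemma gauss_map_EE: "gauss_map p t c s q = EE s / c * Pp (fst q) / snd q"
  by (simp add: gauss_map_eq EE_def)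
lemma cmod_EE: "cmod (EE s) = 1" by (simp add: EE_def norm_exp_eq_Re)
lemma cmod_u0: "cmod (u0 s) = 1" using c_nz by (simp add: u0_def norm_mult norm_divide cmod_EE)
lemma u0_nz: "u0 s \<noteq> 0" using cmod_u0[of s] by auto
lemma u0_sq: "c^2 * (u0 s)^2 = (EE s)^2 * of_real rho"
proof -
  have "complex_of_real (cmod c) ^ 2 = complex_of_real rho" by (simp add: rho_def)
  then show ?thesis using c_nz by (simp add: u0_def power_mult_distrib power_divide)
qed

definition W :: "real \<Rightarrow> complex \<Rightarrow> real \<Rightarrow> complex" where
  "W s x \<tau> = EE s * Pp (zeta x \<tau>) / (c * u0 s * cis (pi * \<tau>))"
definition sig1 :: "real \<Rightarrow> complex \<Rightarrow> real \<Rightarrow> complex \<times> complex" where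
  "sig1 s x \<tau> = (zeta x \<tau>, W s x \<tau>)"
definition sig2 :: "real \<Rightarrow> complex \<Rightarrow> real \<Rightarrow> complex \<times> complex" where
  "sig2 s x \<tau> = (zeta x \<tau>, - W s x \<tau>)"
definition sig :: "real \<Rightarrow> complex \<Rightarrow> real \<Rightarrow> complex \<times> complex" where
  "sig s x = sig1 s x +++ sig2 s x"

lemma zeta_props: "x \<in> Z0 \<Longrightarrow> \<tau> \<in> {0..1} \<Longrightarrow> Pp (zeta x \<tau>) \<noteq> 0 \<and> Pm (zeta x \<tau>) \<noteq> 0 \<and> H (zeta x \<tau>) = beta \<tau>"
  using zeta_in[of x \<tau>] Xs_props zeta[of x] by auto

lemma cis_sq: "cis (pi * \<tau>) ^ 2 = cis (2 * pi * \<tau>)"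
  by (simp add: power2_eq_square cis_mult algebra_simps)

lemma W_sq: assumes "x \<in> Z0" "\<tau> \<in> {0..1}" shows "(W s x \<tau>)^2 = Pp (zeta x \<tau>) * Pm (zeta x \<tau>)"
proof -
  define z where "z = zeta x \<tau>"
  have z: "Pp z \<noteq> 0" "Pm z \<noteq> 0" "Pp z / Pm z = of_real rho * cis (2 * pi * \<tau>)"
    using zeta_props[OF assms] by (auto simp: z_def H_def beta_def)
  have "(W s x \<tau>)^2 = (EE s)^2 * (Pp z)^2 / (c^2 * (u0 s)^2 * cis (pi * \<tau>) ^ 2)"
    by (simp add: W_def z_def power_mult_distrib power_divide)
  also have "\<dots> = (EE s)^2 * (Pp z)^2 / ((EE s)^2 * (Pp z / Pm z))"
    by (simp add: u0_sq cis_sq z(3) mult_ac)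
  also have "\<dots> = Pp z * Pm z" using z(1,2) EE_nz[of s] by (simp add: field_simps power2_eq_square)
  finally show ?thesis by (simp add: z_def)
qed

lemma gauss1: assumes "x \<in> Z0" "\<tau> \<in> {0..1}"
  shows "gauss_map p t c s (sig1 s x \<tau>) = u0 s * cis (pi * \<tau>)"
  using zeta_props[OF assms] EE_nz[of s] c_nz u0_nz[of s]
  by (simp add: gauss_map_EE sig1_def W_def field_simps)

lemma gauss2: assumes "x \<in> Z0" "\<tau> \<in> {0..1}"
  shows "gauss_map p t c s (sig2 s x \<tau>) = - u0 s * cis (pi * \<tau>)"
  using zeta_props[OF assms] EE_nz[of s] c_nz u0_nz[of s]
  by (simp add: gauss_map_EE sig2_def W_def field_simps)

lemma sig_cases: "\<tau> \<in> {0..1} \<Longrightarrow> (\<tau> \<le> 1/2 \<and> sig s x \<tau> = sig1 s x (2*\<tau>) \<and> 2*\<tau> \<in> {0..1})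
   \<or> (\<tau> > 1/2 \<and> sig s x \<tau> = sig2 s x (2*\<tau> - 1) \<and> 2*\<tau> - 1 \<in> {0..1})"
  by (auto simp: sig_def joinpaths_def)

lemma gauss_sig: assumes "x \<in> Z0" "\<tau> \<in> {0..1}"
  shows "gauss_map p t c s (sig s x \<tau>) = u0 s * cis (2 * pi * \<tau>)"
proof -
  from sig_cases[OF assms(2), of s x] show ?thesis
  proof
    assume h: "\<tau> \<le> 1/2 \<and> sig s x \<tau> = sig1 s x (2*\<tau>) \<and> 2*\<tau> \<in> {0..1}"
    then have "gauss_map p t c s (sig s x \<tau>) = u0 s * cis (pi * (2*\<tau>))"
      using gauss1[OF assms(1), of "2*\<tau>" s] by simp
    also have "pi * (2*\<tau>) = 2*pi*\<tau>" by simp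
    finally show ?thesis .
  next
    assume h: "\<tau> > 1/2 \<and> sig s x \<tau> = sig2 s x (2*\<tau> - 1) \<and> 2*\<tau> - 1 \<in> {0..1}"
    then have "gauss_map p t c s (sig s x \<tau>) = - u0 s * cis (pi * (2*\<tau> - 1))"
      using gauss2[OF assms(1), of "2*\<tau> - 1" s] by simp
    also have "\<dots> = u0 s * cis (pi * (2*\<tau> - 1) + pi)"
      by (simp only: mult_minus_left mult_minus_right[symmetric] minus_cis)
    also have "pi * (2*\<tau> - 1) + pi = 2 * pi * \<tau>" by (simp add: algebra_simps)
    finally show ?thesis .
  qed
qed

lemma sig_in: assumes "x \<in> Z0" "\<tau> \<in> {0..1}" shows "sig s x \<tau> \<in> singular_set p t c s"
proof -
  have g: "cmod (gauss_map p t c s (sig s x \<tau>)) = 1"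
    using gauss_sig[OF assms] by (simp add: norm_mult cmod_u0)
  from sig_cases[OF assms(2), of s x] have "sig s x \<tau> \<in> hyp_curve p t"
    using W_sq[OF assms(1)] by (auto simp: hyp_curve_eq sig1_def sig2_def)
  then show ?thesis using g by (simp add: singular_set_def)
qed

lemma W_end: "x \<in> Z0 \<Longrightarrow> W s x 1 = - W s x 0"
  using zeta[of x] by (simp add: W_def pathstart_def pathfinish_def)

lemma path_sig1: "x \<in> Z0 \<Longrightarrow> path (sig1 s x)"
proof -
  assume x: "x \<in> Z0"
  have cz: "continuous_on {0..1} (zeta x)" using zeta[OF x] by (simp add: path_def)
  have cP: "continuous_on {0..1} (\<lambda>\<tau>. Pp (zeta x \<tau>))"
    unfolding Pp_poly by (intro continuous_on_compose2[OF _ cz, of UNIV "poly PPp"]) (auto intro: continuous_intros)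
  have "continuous_on {0..1} (W s x)"
    unfolding W_def[abs_def] using cP c_nz u0_nz[of s] by (intro continuous_intros) auto
  then show ?thesis unfolding path_def sig1_def[abs_def] using cz by (intro continuous_intros)
qed

lemma path_sig2: "x \<in> Z0 \<Longrightarrow> path (sig2 s x)"
proof -
  assume x: "x \<in> Z0"
  have "path (sig1 s x)" by (rule path_sig1[OF x])
  then have "continuous_on {0..1} (\<lambda>\<tau>. (fst (sig1 s x \<tau>), - snd (sig1 s x \<tau>)))"
    unfolding path_def by (intro continuous_intros)
  then show ?thesis by (simp add: path_def sig1_def sig2_def)
qed

lemma sig_path: assumes x: "x \<in> Z0" shows "path (sig s x)" "pathfinish (sig s x) = pathstart (sig s x)"
proof -
  have z0: "zeta x 0 = x" "zeta x 1 = x" using zeta[OF x] by (auto simp: pathstart_def pathfinish_def)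
  have fs: "pathfinish (sig1 s x) = pathstart (sig2 s x)"
    using W_end[OF x, of s] z0 by (simp add: pathfinish_def pathstart_def sig1_def sig2_def)
  show "path (sig s x)" unfolding sig_def using path_join_imp[OF path_sig1[OF x] path_sig2[OF x] fs] .
  show "pathfinish (sig s x) = pathstart (sig s x)"
    using W_end[OF x, of s] z0 by (simp add: sig_def pathfinish_def pathstart_def sig1_def sig2_def joinpaths_def)
qed

lemma sig_simple: assumes x: "x \<in> Z0" shows "simple_path (sig s x)"
  unfolding simple_path_def loop_free_def
proof (intro conjI ballI impI)
  show "path (sig s x)" by (rule sig_path[OF x])
  fix a b assume a: "a \<in> {0..1}" and b: "b \<in> {0..1}" and e: "sig s x a = sig s x b"
  then have "u0 s * cis (2 * pi * a) = u0 s * cis (2 * pi * b)" using gauss_sig[OF x] by metis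
  then have "cis (2 * pi * a) = cis (2 * pi * b)" using u0_nz[of s] by simp
  then show "a = b \<or> a = 0 \<and> b = 1 \<or> a = 1 \<and> b = 0" using cis_inj01[OF a b] by blast
qed

lemma sig_disj: assumes x: "x \<in> Z0" and x': "x' \<in> Z0" and ne: "x \<noteq> x'"
  shows "path_image (sig s x) \<inter> path_image (sig s x') = {}"
proof (rule ccontr)
  assume "path_image (sig s x) \<inter> path_image (sig s x') \<noteq> {}"
  then obtain q where q: "q \<in> path_image (sig s x)" "q \<in> path_image (sig s x')" by blast
  then obtain a where a: "a \<in> {0..1}" "q = sig s x a" unfolding path_image_def by blast
  obtain b where b: "b \<in> {0..1}" "q = sig s x' b" using q unfolding path_image_def by blast
  have e: "sig s x a = sig s x' b" using a b by simp
  note a = a(1) and b = b(1)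
  have "u0 s * cis (2 * pi * a) = u0 s * cis (2 * pi * b)" using gauss_sig[OF x a, of s] gauss_sig[OF x' b, of s] e by metis
  then have "cis (2 * pi * a) = cis (2 * pi * b)" using u0_nz[of s] by simp
  then have ab: "a = b \<or> a = 0 \<and> b = 1 \<or> a = 1 \<and> b = 0" using cis_inj01[OF a b] by blast
  have z0: "zeta x 0 = x" "zeta x 1 = x" "zeta x' 0 = x'" "zeta x' 1 = x'"
    using zeta[OF x] zeta[OF x'] by (auto simp: pathstart_def pathfinish_def)
  have cl: "sig s y 1 = sig s y 0" if "y \<in> Z0" for y
    using sig_path(2)[OF that, of s] by (simp add: pathstart_def pathfinish_def)
  have "\<exists>a'. a' \<in> {0..1} \<and> sig s x a' = sig s x' a'"
    using ab e cl[OF x] cl[OF x'] a by auto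
  then obtain a' where a': "a' \<in> {0..1}" "sig s x a' = sig s x' a'" by blast
  show False
  proof (cases "a' \<le> 1/2")
    case True
    then have "sig s x a' = sig1 s x (2*a')" "sig s x' a' = sig1 s x' (2*a')" "2*a' \<in> {0..1}"
      using sig_cases[OF a'(1), of s x] sig_cases[OF a'(1), of s x'] by auto
    then have "zeta x (2*a') = zeta x' (2*a')" using a'(2) by (simp add: sig1_def)
    then show False using lift_unique[OF x x' \<open>2*a' \<in> {0..1}\<close>] ne by simp
  next
    case False
    then have "sig s x a' = sig2 s x (2*a'-1)" "sig s x' a' = sig2 s x' (2*a'-1)" "2*a'-1 \<in> {0..1}"
      using sig_cases[OF a'(1), of s x] sig_cases[OF a'(1), of s x'] by auto
    then have "zeta x (2*a'-1) = zeta x' (2*a'-1)" using a'(2) by (simp add: sig2_def)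
    then show False using lift_unique[OF x x' \<open>2*a'-1 \<in> {0..1}\<close>] ne by simp
  qed
qed

lemma Arg_param: assumes "cmod v = 1" shows "\<exists>\<theta>. 0 \<le> \<theta> \<and> \<theta> < 1 \<and> v = cis (2 * pi * \<theta>)"
proof -
  have A: "0 \<le> Arg2pi v" "Arg2pi v < 2 * pi" "is_Arg v (Arg2pi v)" using Arg2pi[of v] by auto
  then have "v = cis (Arg2pi v)" using assms by (simp add: is_Arg_def cis_conv_exp mult_ac)
  moreover have "2 * pi * (Arg2pi v / (2 * pi)) = Arg2pi v" by simp
  ultimately show ?thesis using A by (intro exI[of _ "Arg2pi v / (2 * pi)"]) auto
qed

lemma sig_cover: assumes q: "q \<in> singular_set p t c s" shows "\<exists>x\<in>Z0. q \<in> path_image (sig s x)"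
proof -
  obtain z w where qzw: "q = (z, w)" by (cases q)
  define g where "g = gauss_map p t c s q"
  have g1: "cmod g = 1" using q by (simp add: singular_set_def g_def)
  have geq: "g = EE s / c * Pp z / w" by (simp add: g_def gauss_map_EE qzw)
  have w0: "w \<noteq> 0" using g1 geq by auto
  have Pp0: "Pp z \<noteq> 0" using g1 geq by auto
  have hc: "w^2 = Pp z * Pm z" using q by (simp add: singular_set_def hyp_curve_eq qzw)
  have Pm0: "Pm z \<noteq> 0" using hc w0 by auto
  have gnz: "g \<noteq> 0" using g1 by auto
  have weq: "w = EE s * Pp z / (c * g)" using geq w0 c_nz gnz EE_nz[of s] by (auto simp: field_simps)
  have Hz: "H z = c^2 * g^2 / (EE s)^2"
  proof -
    have "g^2 = (EE s)^2 * (Pp z)^2 / (c^2 * w^2)" by (simp add: geq power_mult_distrib power_divide)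
    also have "\<dots> = (EE s)^2 * (Pp z)^2 / (c^2 * (Pp z * Pm z))" by (simp add: hc)
    finally show ?thesis using Pp0 Pm0 c_nz EE_nz[of s] by (simp add: H_def field_simps power2_eq_square)
  qed
  obtain \<theta> where th: "0 \<le> \<theta>" "\<theta> < 1" "g / u0 s = cis (2 * pi * \<theta>)"
    using Arg_param[of "g / u0 s"] g1 by (auto simp: norm_divide cmod_u0)
  have gth: "g = u0 s * cis (2 * pi * \<theta>)" using th(3) u0_nz[of s] by (auto simp: field_simps)
  have Hz2: "H z = of_real rho * cis (4 * pi * \<theta>)"
  proof -
    have "H z = c^2 * (u0 s)^2 * cis (2 * pi * \<theta>)^2 / (EE s)^2" by (simp add: Hz gth power_mult_distrib)
    also have "\<dots> = of_real rho * cis (2 * pi * \<theta>)^2" using EE_nz[of s] by (simp add: u0_sq)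
    also have "cis (2 * pi * \<theta>)^2 = cis (2 * pi * \<theta> + 2 * pi * \<theta>)" by (simp add: power2_eq_square cis_mult)
    also have "2 * pi * \<theta> + 2 * pi * \<theta> = 4 * pi * \<theta>" by simp
    finally show ?thesis .
  qed
  show ?thesis
  proof (cases "\<theta> \<le> 1/2")
    case True
    define \<tau> where "\<tau> = 2 * \<theta>"
    have \<tau>: "\<tau> \<in> {0..1}" using True th by (auto simp: \<tau>_def)
    have "H z = beta \<tau>" using Hz2 by (simp add: beta_def \<tau>_def mult_ac)
    then have "z \<in> fib (beta \<tau>)" using fib_X[OF cmod_beta] Pm0 rho_pos by (auto simp: Xs_def cmod_beta)
    then obtain x where x: "x \<in> Z0" "z = zeta x \<tau>" using fib_beta[OF \<tau>] by auto
    have "w = W s x \<tau>" using weq gth x(2) by (simp add: W_def \<tau>_def mult_ac)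
    then have "q = sig s x \<theta>" using True x(2) by (simp add: qzw sig_def joinpaths_def sig1_def \<tau>_def)
    moreover have "\<theta> \<in> {0..1}" using th by auto
    ultimately have "q \<in> sig s x ` {0..1}" by blast
    then show ?thesis using x(1) unfolding path_image_def by blast
  next
    case False
    define \<tau> where "\<tau> = 2 * \<theta> - 1"
    have \<tau>: "\<tau> \<in> {0..1}" using False th by (auto simp: \<tau>_def)
    have "cis (4 * pi * \<theta>) = cis (2 * pi * \<tau>) * cis (2 * pi)" by (simp add: cis_mult \<tau>_def algebra_simps)
    then have "H z = beta \<tau>" using Hz2 by (simp add: beta_def)
    then have "z \<in> fib (beta \<tau>)" using fib_X[OF cmod_beta] Pm0 rho_pos by (auto simp: Xs_def cmod_beta)
    then obtain x where x: "x \<in> Z0" "z = zeta x \<tau>" using fib_beta[OF \<tau>] by auto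
    have "cis (2 * pi * \<theta>) = - cis (pi * \<tau>)"
      using minus_cis[of "pi * \<tau>"] by (simp add: \<tau>_def algebra_simps)
    then have "w = - W s x \<tau>" using weq gth x(2) by (simp add: W_def)
    then have "q = sig s x \<theta>" using False x(2) by (simp add: qzw sig_def joinpaths_def sig2_def \<tau>_def)
    moreover have "\<theta> \<in> {0..1}" using th by auto
    ultimately have "q \<in> sig s x ` {0..1}" by blast
    then show ?thesis using x(1) unfolding path_image_def by blast
  qed
qed

end

theorem proposition7p1:
  fixes p :: nat and t :: "int \<Rightarrow> real" and c :: complex and s :: real
  assumes p_ge: "p \<ge> 1"
    and t_mono: "\<And>i j. -int p \<le> i \<Longrightarrow> i < j \<Longrightarrow> j \<le> int p \<Longrightarrow> t i < t j"
    and t_sym: "\<And>j. -int p \<le> j \<Longrightarrow> j \<le> int p \<Longrightarrow> t (-j) = - t j"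
    and c_nz: "c \<noteq> 0"
    and s_sign: "s = 1 \<or> s = -1"
    and nondeg: "\<And>z. cmod (Gfun p t c z) = 1 \<Longrightarrow> deriv (Gfun p t c) z \<noteq> 0"
  shows "\<exists>L :: nat \<Rightarrow> (complex \<times> complex) set.
           (\<forall>i<p+1. L i homeomorphic sphere (0::complex) 1)
         \<and> (\<forall>i<p+1. \<forall>k<p+1. i \<noteq> k \<longrightarrow> L i \<inter> L k = {})
         \<and> (\<Union>i<p+1. L i) = singular_set p t c s"
proof -
  interpret zz p t c
    by unfold_locales (use c_nz nondeg t_mono in auto)
  obtain f where f: "bij_betw f {0..<Suc p} Z0"
    using ex_bij_betw_nat_finite[OF finite_Z0] card_Z0 by auto
  have fZ: "f i \<in> Z0" if "i < p+1" for i
    using f that by (auto simp: bij_betw_def)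
  define L where "L i = path_image (sig s (f i))" for i
  have P1: "\<forall>i<p+1. L i homeomorphic sphere (0::complex) 1"
  proof (intro allI impI)
    fix i assume i: "i < p+1"
    show "L i homeomorphic sphere (0::complex) 1"
      unfolding L_def by (rule homeomorphic_simple_path_image_circle[OF sig_simple[OF fZ[OF i]] sig_path(2)[OF fZ[OF i]]]) simp
  qed
  have P2: "\<forall>i<p+1. \<forall>k<p+1. i \<noteq> k \<longrightarrow> L i \<inter> L k = {}"
  proof (intro allI impI)
    fix i k assume i: "i < p+1" and k: "k < p+1" and ne: "i \<noteq> k"
    have "f i \<noteq> f k" using f i k ne by (auto simp: bij_betw_def inj_on_def)
    then show "L i \<inter> L k = {}" unfolding L_def by (rule sig_disj[OF fZ[OF i] fZ[OF k]])
  qed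
  have P3: "(\<Union>i<p+1. L i) = singular_set p t c s"
  proof
    show "(\<Union>i<p+1. L i) \<subseteq> singular_set p t c s"
      using sig_in fZ by (auto simp: L_def path_image_def)
    show "singular_set p t c s \<subseteq> (\<Union>i<p+1. L i)"
    proof
      fix q assume "q \<in> singular_set p t c s"
      then obtain x where x: "x \<in> Z0" "q \<in> path_image (sig s x)" using sig_cover by blast
      have "x \<in> f ` {0..<Suc p}" using f x(1) by (simp add: bij_betw_def)
      then obtain i where "i \<in> {0..<Suc p}" "x = f i" by blast
      then show "q \<in> (\<Union>i<p+1. L i)" using x by (auto simp: L_def)
    qed
  qed
  show ?thesis using P1 P2 P3 by blast
qed

end
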